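(* Let $G$ be a connected graph with $n$ vertices and matching number $k$, where $2\le k<\lfloor n/2\rfloor$. Then $\sigma_0(G)\ge 2-\frac kn$ and $\sigma_1(G)\ge 4n-3k$. In each bound, equality holds if and only if $G=K_k\vee\overline{K}_{n-k}$.
   Context: All graphs are finite, simple, undirected. For a connected graph $G$ and $u\in V(G)$, $\varepsilon_G(u)=\max_v d_G(u,v)$; $\sigma_0(G)=\frac1{|V(G)|}\sum_u\varepsilon_G(u)$, $\sigma_1(G)=\sum_u\varepsilon_G(u)^2$. The matching number is the maximum number of pairwise disjoint edges. $K_r$ is the complete graph, $\overline{K}_r$ the edgeless graph on $r$ vertices, and $G\vee H$ (the join) is obtained from the disjoint union of $G$ and $H$ by adding all edges between $V(G)$ and $V(H)$. *)

theory Defs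
  imports Main "HOL-Library.Extended_Nat" Complex_Main
begin

definition simple_graph :: "'a set \<Rightarrow> 'a set set \<Rightarrow> bool" where
  "simple_graph V E \<longleftrightarrow> finite V \<and> (\<forall>e\<in>E. \<exists>u v. u \<in> V \<and> v \<in> V \<and> u \<noteq> v \<and> e = {u, v})"

definition is_walk :: "'a set \<Rightarrow> 'a set set \<Rightarrow> 'a list \<Rightarrow> bool" where
  "is_walk V E xs \<longleftrightarrow> xs \<noteq> [] \<and> set xs \<subseteq> V \<and>
     (\<forall>i. Suc i < length xs \<longrightarrow> {xs ! i, xs ! Suc i} \<in> E)"

definition connected_graph :: "'a set \<Rightarrow> 'a set set \<Rightarrow> bool" where
  "connected_graph V E \<longleftrightarrow> V \<noteq> {} \<and>
     (\<forall>u\<in>V. \<forall>v\<in>V. \<exists>xs. is_walk V E xs \<and> hd xs = u \<and> last xs = v)"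

definition gdist :: "'a set \<Rightarrow> 'a set set \<Rightarrow> 'a \<Rightarrow> 'a \<Rightarrow> nat" where
  "gdist V E u v = (LEAST n. \<exists>xs. is_walk V E xs \<and> hd xs = u \<and> last xs = v \<and> length xs = Suc n)"

definition ecc :: "'a set \<Rightarrow> 'a set set \<Rightarrow> 'a \<Rightarrow> nat" where
  "ecc V E u = Max (gdist V E u ` V)"

definition sigma0 :: "'a set \<Rightarrow> 'a set set \<Rightarrow> real" where
  "sigma0 V E = (\<Sum>u\<in>V. real (ecc V E u)) / real (card V)"

definition sigma1 :: "'a set \<Rightarrow> 'a set set \<Rightarrow> nat" where
  "sigma1 V E = (\<Sum>u\<in>V. (ecc V E u)^2)"

definition is_matching :: "'a set set \<Rightarrow> 'a set set \<Rightarrow> bool" where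
  "is_matching E M \<longleftrightarrow> M \<subseteq> E \<and> (\<forall>e\<in>M. \<forall>f\<in>M. e \<noteq> f \<longrightarrow> e \<inter> f = {})"

definition matching_number :: "'a set set \<Rightarrow> nat" where
  "matching_number E = Max (card ` {M. is_matching E M})"

definition graph_iso :: "'a set \<Rightarrow> 'a set set \<Rightarrow> 'b set \<Rightarrow> 'b set set \<Rightarrow> bool" where
  "graph_iso V E W F \<longleftrightarrow> (\<exists>f. bij_betw f V W \<and>
     (\<forall>u\<in>V. \<forall>v\<in>V. {u, v} \<in> E \<longleftrightarrow> {f u, f v} \<in> F))"

text \<open>The join K_k \<or> (complement of K_m): vertices 0..k+m-1, vertices below k form the clique,
  the remaining m vertices are independent, and every clique vertex is joined to every other vertex.\<close>

definition join_vertices :: "nat \<Rightarrow> nat \<Rightarrow> nat set" where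
  "join_vertices k m = {0..<k+m}"

definition join_edges :: "nat \<Rightarrow> nat \<Rightarrow> nat set set" where
  "join_edges k m = {{i, j} | i j. i < k + m \<and> j < k + m \<and> i \<noteq> j \<and> (i < k \<or> j < k)}"

end

theory Submission
  imports Defs
begin

lemma walk_gdist_le:
  assumes "is_walk V E xs" "hd xs = u" "last xs = v" "length xs = Suc m"
  shows "gdist V E u v \<le> m"
  unfolding gdist_def using assms by (intro Least_le) blast

lemma gdist_walk:
  assumes "connected_graph V E" "u \<in> V" "v \<in> V"
  shows "\<exists>xs. is_walk V E xs \<and> hd xs = u \<and> last xs = v \<and> length xs = Suc (gdist V E u v)"
proof -
  obtain xs where xs: "is_walk V E xs" "hd xs = u" "last xs = v"
    using assms unfolding connected_graph_def by blast
  then have "xs \<noteq> []" unfolding is_walk_def by auto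
  then obtain m where "length xs = Suc m" by (cases xs) auto
  with xs have ex: "\<exists>n xs. is_walk V E xs \<and> hd xs = u \<and> last xs = v \<and> length xs = Suc n" by blast
  show ?thesis unfolding gdist_def by (rule LeastI_ex[OF ex])
qed

lemma gdist_pos:
  assumes "connected_graph V E" "u \<in> V" "v \<in> V" "u \<noteq> v"
  shows "gdist V E u v \<ge> 1"
proof (rule ccontr)
  assume "\<not> ?thesis"
  hence "gdist V E u v = 0" by simp
  with gdist_walk[OF assms(1-3)] obtain xs where "hd xs = u" "last xs = v" "length xs = 1" by auto
  then show False using assms(4) by (cases xs) auto
qed

lemma gdist_ge2:
  assumes "connected_graph V E" "u \<in> V" "v \<in> V" "u \<noteq> v" "{u,v} \<notin> E"
  shows "gdist V E u v \<ge> 2"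
proof (rule ccontr)
  assume "\<not> ?thesis"
  with gdist_pos[OF assms(1-4)] have "gdist V E u v = 1" by simp
  with gdist_walk[OF assms(1-3)] obtain xs where w: "is_walk V E xs" "hd xs = u" "last xs = v" "length xs = 2" by auto
  then obtain a b where ab: "xs = [a,b]" by (metis length_0_conv length_Suc_conv numeral_2_eq_2)
  with w have "{a,b} \<in> E" unfolding is_walk_def by fastforce
  with ab w assms(5) show False by simp
qed

lemma walk1: "u \<in> V \<Longrightarrow> is_walk V E [u]"
  by (auto simp: is_walk_def)

lemma walk2: "u \<in> V \<Longrightarrow> v \<in> V \<Longrightarrow> {u,v} \<in> E \<Longrightarrow> is_walk V E [u,v]"
  by (auto simp: is_walk_def less_Suc_eq)

lemma walk3: "u \<in> V \<Longrightarrow> v \<in> V \<Longrightarrow> w \<in> V \<Longrightarrow> {u,w} \<in> E \<Longrightarrow> {w,v} \<in> E \<Longrightarrow> is_walk V E [u,w,v]"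
  by (auto simp: is_walk_def less_Suc_eq)

lemma ecc_ge: "finite V \<Longrightarrow> v \<in> V \<Longrightarrow> gdist V E u v \<le> ecc V E u"
  unfolding ecc_def by (rule Max_ge) auto

lemma ecc_le: "finite V \<Longrightarrow> V \<noteq> {} \<Longrightarrow> (\<And>v. v \<in> V \<Longrightarrow> gdist V E u v \<le> m) \<Longrightarrow> ecc V E u \<le> m"
  unfolding ecc_def by (subst Max_le_iff) auto

lemma card_le_matching_number:
  assumes "finite E" "is_matching E M"
  shows "card M \<le> matching_number E"
proof -
  have "{M. is_matching E M} \<subseteq> Pow E" unfolding is_matching_def by auto
  hence "finite {M. is_matching E M}" using assms(1) by (meson finite_Pow_iff finite_subset)
  thus ?thesis unfolding matching_number_def using assms(2) by (auto intro: Max_ge)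
qed

lemma pair_matching:
  assumes fin: "finite A" and disj: "A \<inter> W = {}" and bij: "bij_betw g A W"
    and edges: "\<forall>x\<in>A. {x, g x} \<in> E" and X: "is_matching E X" "finite X"
    and Xdisj: "\<forall>e\<in>X. e \<inter> (A \<union> W) = {}"
  shows "is_matching E ((\<lambda>x. {x, g x}) ` A \<union> X) \<and> card ((\<lambda>x. {x, g x}) ` A \<union> X) = card A + card X"
proof -
  have gW: "g x \<in> W" if "x \<in> A" for x using bij that by (auto simp: bij_betw_def)
  have inj: "inj_on g A" using bij by (auto simp: bij_betw_def)
  have injp: "inj_on (\<lambda>x. {x, g x}) A"
  proof (rule inj_onI)
    fix x y assume "x\<in>A" "y\<in>A" "{x, g x} = {y, g y}"
    then show "x = y" using gW disj by (auto simp: doubleton_eq_iff)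
  qed
  have m: "is_matching E ((\<lambda>x. {x, g x}) ` A \<union> X)"
    unfolding is_matching_def
  proof (intro conjI ballI impI)
    show "(\<lambda>x. {x, g x}) ` A \<union> X \<subseteq> E" using edges X(1) by (auto simp: is_matching_def)
  next
    fix e f assume e: "e \<in> (\<lambda>x. {x, g x}) ` A \<union> X" and f: "f \<in> (\<lambda>x. {x, g x}) ` A \<union> X" and ne: "e \<noteq> f"
    show "e \<inter> f = {}"
    proof (cases "e \<in> X")
      case True
      show ?thesis
      proof (cases "f \<in> X")
        case True
        with \<open>e \<in> X\<close> ne X(1) show ?thesis by (auto simp: is_matching_def)
      next
        case False
        with f obtain y where "y \<in> A" "f = {y, g y}" by auto
        with Xdisj \<open>e \<in> X\<close> gW show ?thesis by auto
      qed
    next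
      case False
      with e obtain x where x: "x \<in> A" "e = {x, g x}" by auto
      show ?thesis
      proof (cases "f \<in> X")
        case True
        with Xdisj x gW show ?thesis by auto
      next
        case False
        with f obtain y where y: "y \<in> A" "f = {y, g y}" by auto
        with x ne have "x \<noteq> y" by auto
        moreover have "g x \<noteq> g y" using \<open>x \<noteq> y\<close> inj x y by (meson inj_on_eq_iff)
        ultimately show ?thesis using x y gW disj by auto
      qed
    qed
  qed
  have "(\<lambda>x. {x, g x}) ` A \<inter> X = {}" using Xdisj by auto
  hence "card ((\<lambda>x. {x, g x}) ` A \<union> X) = card ((\<lambda>x. {x, g x}) ` A) + card X"
    using fin X(2) by (simp add: card_Un_disjoint)
  also have "\<dots> = card A + card X" using injp by (simp add: card_image)
  finally show ?thesis using m by simp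
qed

theorem proposition5p2:
  fixes V :: "'a set" and E :: "'a set set" and n k :: nat
  assumes "simple_graph V E" and "connected_graph V E"
    and "n = card V" and "k = matching_number E"
    and "2 \<le> k" and "k < n div 2"
  shows "sigma0 V E \<ge> 2 - real k / real n
    \<and> real (sigma1 V E) \<ge> 4 * real n - 3 * real k
    \<and> (sigma0 V E = 2 - real k / real n \<longleftrightarrow> graph_iso V E (join_vertices k (n - k)) (join_edges k (n - k)))
    \<and> (real (sigma1 V E) = 4 * real n - 3 * real k \<longleftrightarrow> graph_iso V E (join_vertices k (n - k)) (join_edges k (n - k)))"
proof -
  note sg = assms(1) and con = assms(2)
  have finV: "finite V" using sg by (simp add: simple_graph_def)
  have EV: "E \<subseteq> Pow V" using sg unfolding simple_graph_def by auto
  have finE: "finite E" using finV EV by (meson finite_Pow_iff finite_subset)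
  have n2: "n \<ge> 2*k + 2" using assms(6) by linarith
  have Vne: "V \<noteq> {}" using n2 assms(3) by auto
  have npos: "n > 0" using n2 by simp
  have noloop: "{u} \<notin> E" for u using sg unfolding simple_graph_def by (auto simp: doubleton_eq_iff)
  define D where "D = {u\<in>V. \<forall>v\<in>V. v \<noteq> u \<longrightarrow> {u,v} \<in> E}"
  have DV: "D \<subseteq> V" unfolding D_def by auto
  have finD: "finite D" using finV DV finite_subset by blast
  define d where "d = card D"
  have dn: "d \<le> n" unfolding d_def assms(3) using DV finV card_mono by blast
  have cVD: "card (V - D) = n - d" unfolding d_def assms(3) using DV finD by (simp add: card_Diff_subset)
  have other: "\<exists>v\<in>V. v \<noteq> u" if "u \<in> V" for u
  proof (rule ccontr)
    assume "\<not> ?thesis"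
    hence "V \<subseteq> {u}" by auto
    hence "card V \<le> 1" using card_mono[of "{u}" V] by simp
    thus False using n2 assms(3) by simp
  qed
  have eccD: "ecc V E u = 1" if "u \<in> D" for u
  proof (rule antisym)
    have uV: "u \<in> V" using that DV by auto
    show "ecc V E u \<le> 1"
    proof (rule ecc_le[OF finV Vne])
      fix v assume v: "v \<in> V"
      show "gdist V E u v \<le> 1"
      proof (cases "v = u")
        case True
        with walk_gdist_le[OF walk1[OF uV], of u u 0] show ?thesis by simp
      next
        case False
        with that v have "{u,v} \<in> E" unfolding D_def by auto
        from walk_gdist_le[OF walk2[OF uV v this], of u v 1] show ?thesis by simp
      qed
    qed
    from other[OF uV] obtain v where "v \<in> V" "v \<noteq> u" by auto
    with gdist_pos[OF con uV this(1)] ecc_ge[OF finV \<open>v \<in> V\<close>, of E u]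
    show "1 \<le> ecc V E u" by simp
  qed
  have eccND: "ecc V E u \<ge> 2" if "u \<in> V - D" for u
  proof -
    from that obtain v where v: "v \<in> V" "v \<noteq> u" "{u,v} \<notin> E" unfolding D_def by auto
    from gdist_ge2[OF con _ v(1) _ v(3)] that v ecc_ge[OF finV v(1), of E u] show ?thesis by fastforce
  qed
  have eccND2: "ecc V E u \<le> 2" if "u \<in> V - D" "D \<noteq> {}" for u
  proof (rule ecc_le[OF finV Vne])
    from that obtain w where w: "w \<in> D" by auto
    have uV: "u \<in> V" using that by auto
    have wV: "w \<in> V" using w DV by auto
    have wu: "w \<noteq> u" using w that by auto
    fix v assume v: "v \<in> V"
    have uw: "{u,w} \<in> E" using w uV wu unfolding D_def by (auto simp: insert_commute)
    show "gdist V E u v \<le> 2"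
    proof (cases "v = u")
      case True
      with walk_gdist_le[OF walk1[OF uV], of u u 0] show ?thesis by simp
    next
      case False
      show ?thesis
      proof (cases "v = w")
        case True
        from walk_gdist_le[OF walk2[OF uV wV uw], of u w 1] True show ?thesis by simp
      next
        case False
        hence "{w,v} \<in> E" using w v unfolding D_def by auto
        from walk_gdist_le[OF walk3[OF uV v wV uw this], of u v 2] show ?thesis by simp
      qed
    qed
  qed
  define S where "S = (\<Sum>u\<in>V. ecc V E u)"
  define S1 where "S1 = (\<Sum>u\<in>V. (ecc V E u)^2)"
  have Ssplit: "S = (\<Sum>u\<in>V-D. ecc V E u) + d"
    unfolding S_def d_def using sum.subset_diff[OF DV finV, of "ecc V E"] eccD by simp
  have S1split: "S1 = (\<Sum>u\<in>V-D. (ecc V E u)^2) + d"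
    unfolding S1_def d_def using sum.subset_diff[OF DV finV, of "\<lambda>u. (ecc V E u)^2"] eccD by simp
  have lo: "(\<Sum>u\<in>V-D. ecc V E u) \<ge> 2 * (n - d)"
  proof -
    have "(\<Sum>u\<in>V-D. ecc V E u) \<ge> (\<Sum>u\<in>V-D. 2)" by (rule sum_mono) (use eccND in auto)
    thus ?thesis using cVD by simp
  qed
  have lo1: "(\<Sum>u\<in>V-D. (ecc V E u)^2) \<ge> 4 * (n - d)"
  proof -
    have "(\<Sum>u\<in>V-D. (ecc V E u)^2) \<ge> (\<Sum>u\<in>V-D. 4)"
    proof (rule sum_mono)
      fix u assume "u \<in> V - D"
      from eccND[OF this] have "2^2 \<le> (ecc V E u)^2" by (rule power_mono) simp
      thus "4 \<le> (ecc V E u)^2" by simp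
    qed
    thus ?thesis using cVD by simp
  qed
  have exact: "S = 2*n - d \<and> S1 = 4*n - 3*d" if "D \<noteq> {}"
  proof -
    have "(\<Sum>u\<in>V-D. ecc V E u) = (\<Sum>u\<in>V-D. 2)"
      by (rule sum.cong) (use eccND eccND2 that in \<open>auto intro: antisym\<close>)
    moreover have "(\<Sum>u\<in>V-D. (ecc V E u)^2) = (\<Sum>u\<in>V-D. 4)"
    proof (rule sum.cong)
      fix u assume "u \<in> V - D"
      with eccND eccND2 that have "ecc V E u = 2" by (auto intro: antisym)
      thus "(ecc V E u)^2 = 4" by simp
    qed simp
    ultimately show ?thesis using Ssplit S1split cVD dn by auto
  qed
  have dk: "d \<le> k"
  proof (rule ccontr)
    assume "\<not> d \<le> k"
    hence "Suc k \<le> card D" unfolding d_def by simp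
    then obtain A where A: "A \<subseteq> D" "card A = Suc k" "finite A" by (rule obtain_subset_with_card_n)
    have "card (V - A) = n - Suc k" using A DV finV assms(3) by (simp add: card_Diff_subset)
    hence "Suc k \<le> card (V - A)" using n2 by simp
    then obtain W where W: "W \<subseteq> V - A" "card W = Suc k" "finite W" by (rule obtain_subset_with_card_n)
    obtain g where g: "bij_betw g A W" using finite_same_card_bij[OF A(3) W(3)] A W by auto
    have "\<forall>x\<in>A. {x, g x} \<in> E"
    proof
      fix x assume x: "x \<in> A"
      have "g x \<in> W" using g x by (auto simp: bij_betw_def)
      hence "g x \<in> V" "g x \<noteq> x" using W x by auto
      thus "{x, g x} \<in> E" using x A(1) unfolding D_def by auto
    qed
    moreover have "A \<inter> W = {}" using W by auto
    ultimately have "is_matching E ((\<lambda>x. {x, g x}) ` A \<union> {}) \<and> card ((\<lambda>x. {x, g x}) ` A \<union> {}) = card A + card {}"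
      using pair_matching[OF A(3) _ g, of E "{}"] by (auto simp: is_matching_def)
    hence "is_matching E ((\<lambda>x. {x, g x}) ` A) \<and> card ((\<lambda>x. {x, g x}) ` A) = Suc k"
      using A by simp
    with card_le_matching_number[OF finE] assms(4) show False by fastforce
  qed
  have Dne_if: "D \<noteq> {}" if "d = k" using that assms(5) unfolding d_def by auto
  have indep: "{u,v} \<notin> E" if "d = k" "u \<in> V - D" "v \<in> V - D" "u \<noteq> v" for u v
  proof
    assume uv: "{u,v} \<in> E"
    have "card (V - D - {u,v}) = card (V - D) - 2" using that finV
      by (subst card_Diff_subset) auto
    hence "card (V - D - {u,v}) = n - k - 2" using cVD that(1) by simp
    hence "card D \<le> card (V - D - {u,v})" using n2 that(1) d_def by simp
    then obtain W where W: "W \<subseteq> V - D - {u,v}" "card W = card D" "finite W" by (rule obtain_subset_with_card_n)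
    obtain g where g: "bij_betw g D W" using finite_same_card_bij[OF finD W(3)] W by auto
    have "\<forall>x\<in>D. {x, g x} \<in> E"
    proof
      fix x assume x: "x \<in> D"
      have "g x \<in> W" using g x by (auto simp: bij_betw_def)
      hence "g x \<in> V" "g x \<noteq> x" using W x by auto
      thus "{x, g x} \<in> E" using x unfolding D_def by auto
    qed
    moreover have "D \<inter> W = {}" using W by auto
    moreover have "is_matching E {{u,v}}" using uv by (auto simp: is_matching_def)
    moreover have "\<forall>e\<in>{{u,v}}. e \<inter> (D \<union> W) = {}" using W that by auto
    ultimately have "is_matching E ((\<lambda>x. {x, g x}) ` D \<union> {{u,v}}) \<and> card ((\<lambda>x. {x, g x}) ` D \<union> {{u,v}}) = card D + card {{u,v}}"
      using pair_matching[OF finD _ g, of E "{{u,v}}"] by blast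
    hence "is_matching E ((\<lambda>x. {x, g x}) ` D \<union> {{u,v}}) \<and> card ((\<lambda>x. {x, g x}) ` D \<union> {{u,v}}) = k + 1"
      using d_def that(1) by simp
    with card_le_matching_number[OF finE] assms(4) show False by fastforce
  qed
  have nk: "k + (n - k) = n" using n2 by simp
  have iso_iff: "graph_iso V E (join_vertices k (n - k)) (join_edges k (n - k)) \<longleftrightarrow> d = k"
  proof
    assume "graph_iso V E (join_vertices k (n - k)) (join_edges k (n - k))"
    then obtain f where f: "bij_betw f V {0..<n}"
      and fe: "\<forall>u\<in>V. \<forall>v\<in>V. {u, v} \<in> E \<longleftrightarrow> {f u, f v} \<in> join_edges k (n - k)"
      unfolding graph_iso_def join_vertices_def nk by blast
    have fV: "f ` V = {0..<n}" and finj: "inj_on f V" using f by (auto simp: bij_betw_def)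
    define D' where "D' = {u\<in>V. f u < k}"
    have "D' \<subseteq> D"
    proof
      fix u assume u: "u \<in> D'"
      have "{u,v} \<in> E" if v: "v \<in> V" "v \<noteq> u" for v
      proof -
        have "f v \<noteq> f u" using finj u v unfolding D'_def by (auto dest: inj_onD)
        moreover have "f u < n" "f v < n" using fV u v unfolding D'_def by auto
        moreover have "f u < k" using u unfolding D'_def by auto
        ultimately have "{f u, f v} \<in> join_edges k (n - k)" using nk unfolding join_edges_def
          by (intro CollectI exI[of _ "f u"] exI[of _ "f v"]) auto
        thus ?thesis using fe u v unfolding D'_def by auto
      qed
      thus "u \<in> D" using u unfolding D_def D'_def by auto
    qed
    moreover have "f ` D' = {0..<k}"
    proof
      show "f ` D' \<subseteq> {0..<k}" unfolding D'_def by auto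
      show "{0..<k} \<subseteq> f ` D'"
      proof
        fix i assume "i \<in> {0..<k}"
        hence "i \<in> f ` V" using fV n2 by auto
        then obtain u where "u \<in> V" "i = f u" by auto
        thus "i \<in> f ` D'" using \<open>i \<in> {0..<k}\<close> unfolding D'_def by auto
      qed
    qed
    hence "card D' = k" using card_image[OF inj_on_subset[OF finj, of D']] unfolding D'_def by auto
    ultimately have "k \<le> d" unfolding d_def using card_mono[OF finD] by metis
    with dk show "d = k" by simp
  next
    assume dk': "d = k"
    obtain g1 where g1: "bij_betw g1 D {0..<k}" using finite_same_card_bij[OF finD, of "{0..<k}"] dk' d_def by auto
    obtain g2 where g2: "bij_betw g2 (V - D) {k..<n}"
      using finite_same_card_bij[of "V - D" "{k..<n}"] finV cVD dk' by auto
    define f where "f x = (if x \<in> D then g1 x else g2 x)" for x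
    have b1: "bij_betw f D {0..<k}" using g1 by (rule bij_betw_cong[THEN iffD1, rotated]) (simp add: f_def)
    have b2: "bij_betw f (V - D) {k..<n}" using g2 by (rule bij_betw_cong[THEN iffD1, rotated]) (simp add: f_def)
    have fb: "bij_betw f V {0..<n}"
    proof -
      have "bij_betw f (D \<union> (V - D)) ({0..<k} \<union> {k..<n})" by (rule bij_betw_combine[OF b1 b2]) auto
      moreover have "D \<union> (V - D) = V" using DV by auto
      moreover have "{0..<k} \<union> {k..<n} = {0..<n}" using n2 by auto
      ultimately show ?thesis by simp
    qed
    have fD: "f u < k \<longleftrightarrow> u \<in> D" if "u \<in> V" for u
    proof
      assume "f u < k"
      show "u \<in> D"
      proof (rule ccontr)
        assume "u \<notin> D"
        hence "f u \<in> {k..<n}" using that b2 by (auto simp: bij_betw_def)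
        thus False using \<open>f u < k\<close> by simp
      qed
    qed (use b1 in \<open>auto simp: bij_betw_def\<close>)
    have fn: "f u < n" if "u \<in> V" for u using fb that by (auto simp: bij_betw_def)
    have finj: "inj_on f V" using fb by (auto simp: bij_betw_def)
    show "graph_iso V E (join_vertices k (n - k)) (join_edges k (n - k))"
      unfolding graph_iso_def join_vertices_def nk
    proof (intro exI conjI ballI)
      show "bij_betw f V {0..<n}" by (rule fb)
      fix u v assume u: "u \<in> V" and v: "v \<in> V"
      show "{u, v} \<in> E \<longleftrightarrow> {f u, f v} \<in> join_edges k (n - k)"
      proof (cases "u = v")
        case True
        thus ?thesis using noloop unfolding join_edges_def by (auto simp: doubleton_eq_iff)
      next
        case False
        hence fne: "f u \<noteq> f v" using finj u v by (auto dest: inj_onD)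
        have "{f u, f v} \<in> join_edges k (n - k) \<longleftrightarrow> f u < k \<or> f v < k"
        proof
          assume "{f u, f v} \<in> join_edges k (n - k)"
          then obtain i j where "{f u, f v} = {i, j}" "i < k \<or> j < k" unfolding join_edges_def by auto
          thus "f u < k \<or> f v < k" by (auto simp: doubleton_eq_iff)
        next
          assume "f u < k \<or> f v < k"
          thus "{f u, f v} \<in> join_edges k (n - k)" using fne fn[OF u] fn[OF v] nk
            unfolding join_edges_def by auto
        qed
        also have "\<dots> \<longleftrightarrow> u \<in> D \<or> v \<in> D" using fD u v by auto
        also have "\<dots> \<longleftrightarrow> {u, v} \<in> E"
        proof
          assume "u \<in> D \<or> v \<in> D"
          thus "{u, v} \<in> E" using u v False unfolding D_def by (auto simp: insert_commute)
        next
          assume "{u, v} \<in> E"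
          thus "u \<in> D \<or> v \<in> D" using indep[OF dk', of u v] u v False by auto
        qed
        finally show ?thesis by simp
      qed
    qed
  qed
  have Sge: "S + d \<ge> 2*n" using Ssplit lo dn by simp
  have S1ge: "S1 + 3*d \<ge> 4*n" using S1split lo1 dn by simp
  have s0: "sigma0 V E = real S / real n" unfolding sigma0_def S_def assms(3) by simp
  have s1: "sigma1 V E = S1" unfolding sigma1_def S1_def by simp
  have e0: "sigma0 V E = 2 - real k / real n \<longleftrightarrow> S + k = 2*n"
  proof -
    have "sigma0 V E = 2 - real k / real n \<longleftrightarrow> real S = 2 * real n - real k"
      using npos unfolding s0 by (simp add: field_simps)
    also have "\<dots> \<longleftrightarrow> real (S + k) = real (2*n)" by (simp only: of_nat_add of_nat_mult) linarith
    also have "\<dots> \<longleftrightarrow> S + k = 2*n" by (simp only: of_nat_eq_iff)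
    finally show ?thesis .
  qed
  have g0: "sigma0 V E \<ge> 2 - real k / real n"
  proof -
    have "real (2*n) \<le> real (S + k)" using Sge dk by simp
    hence le: "2 * real n - real k \<le> real S" by simp
    have "2 - real k / real n = (2 * real n - real k) / real n" using npos by (simp add: field_simps)
    also have "\<dots> \<le> real S / real n" using le by (rule divide_right_mono) simp
    finally show ?thesis unfolding s0 .
  qed
  have e1: "real (sigma1 V E) = 4 * real n - 3 * real k \<longleftrightarrow> S1 + 3*k = 4*n"
  proof -
    have "real (sigma1 V E) = 4 * real n - 3 * real k \<longleftrightarrow> real (S1 + 3*k) = real (4*n)"
      unfolding s1 by (simp only: of_nat_add of_nat_mult of_nat_numeral) linarith
    also have "\<dots> \<longleftrightarrow> S1 + 3*k = 4*n" by (simp only: of_nat_eq_iff)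
    finally show ?thesis .
  qed
  have g1: "real (sigma1 V E) \<ge> 4 * real n - 3 * real k"
  proof -
    have "real (4*n) \<le> real (S1 + 3*k)" using S1ge dk by simp
    thus ?thesis unfolding s1 by simp
  qed
  have q0: "S + k = 2*n \<longleftrightarrow> d = k"
  proof
    assume "S + k = 2*n" thus "d = k" using Sge dk by simp
  next
    assume "d = k" thus "S + k = 2*n" using exact[OF Dne_if] n2 by simp
  qed
  have q1: "S1 + 3*k = 4*n \<longleftrightarrow> d = k"
  proof
    assume "S1 + 3*k = 4*n" thus "d = k" using S1ge dk by simp
  next
    assume "d = k" thus "S1 + 3*k = 4*n" using exact[OF Dne_if] n2 by simp
  qed
  show ?thesis using g0 g1 e0 e1 q0 q1 iso_iff by simp
qed

end
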